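(* Let $\mathcal C\subseteq 2^{[n]}$ be an inductively pierced code, and suppose $G(\mathcal C)$ contains a clique of size $k+1$. Then $\mathcal C$ does not have a well-formed realization by open balls in $\mathbb R^{k-1}$.
   Context: A code is a set $\mathcal C\subseteq 2^{[n]}$, $[n]=\{1,\dots,n\}$. Standing conventions: $\emptyset\in\mathcal C$; every neuron lies in some codeword; no two distinct neurons lie in exactly the same codewords. $\mathcal C\setminus i$ is obtained by removing $i$ from every codeword. For $\alpha\subseteq\beta$, $[\alpha,\beta]=\{\gamma:\alpha\subseteq\gamma\subseteq\beta\}$, of rank $|\beta\setminus\alpha|$. A neuron $i$ is a $k$-piercing of $\mathcal C$ if there are $\sigma\subseteq\tau\subseteq[n]\setminus\{i\}$ with $[\sigma,\tau]$ of rank $k$, $[\sigma,\tau]\subseteq\mathcal C\setminus i$, and $\mathcal C=(\mathcal C\setminus i)\cup[\sigma\cup\{i\},\tau\cup\{i\}]$. A code is $k$-inductively pierced if $\mathcal C=\{\emptyset\}$, or some neuron $i$ is a $k'$-piercing for some $k'\le k$ and $\mathcal C\setminus i$ is $k$-inductively pierced; inductively pierced means $k$-inductively pierced for some $k$. A pseudo-monomial is $\prod_{a\in\alpha}x_a\prod_{b\in\beta}(1-x_b)\in\mathbb F_2[x_1,\dots,x_n]$ with $\alpha\cap\beta=\emptyset$, ordered by divisibility; $J_\mathcal C=\langle\rho_\gamma:\gamma\notin\mathcal C\rangle$ with $\rho_\gamma=\prod_{a\in\gamma}x_a\prod_{b\notin\gamma}(1-x_b)$, and $\mathrm{CF}(J_\mathcal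 C)$ is its set of minimal pseudo-monomials (for inductively pierced codes all have degree two). $G(\mathcal C)$ is the graph on $[n]$ with edge $ab$ whenever $\mathrm{CF}(J_\mathcal C)$ contains no pseudo-monomial in the variables $x_a,x_b$. Sets $U_1,\dots,U_n\subseteq\mathbb R^d$ realize $\mathcal C$ if $\mathcal C=\{\gamma:\bigcap_{i\in\gamma}U_i\setminus\bigcup_{j\notin\gamma}U_j\ne\emptyset\}$. A collection of $(d-1)$-spheres in $\mathbb R^d$ is well-formed if for every $m\le d$ the intersection of any $m$ of them is empty or a $(d-m)$-dimensional sphere, and the intersection of any $d+1$ of them is empty; open balls are well-formed if their boundary spheres are. *)

theory Defs
  imports "HOL-Analysis.Analysis" "HOL-Library.Poly_Mapping" "HOL-Library.Z2"
begin

definition is_code :: "nat \<Rightarrow> nat set set \<Rightarrow> bool" where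
  "is_code n C \<longleftrightarrow> C \<subseteq> Pow {1..n} \<and> {} \<in> C
     \<and> (\<forall>i\<in>{1..n}. \<exists>c\<in>C. i \<in> c)
     \<and> (\<forall>i\<in>{1..n}. \<forall>j\<in>{1..n}. i \<noteq> j \<longrightarrow> (\<exists>c\<in>C. (i \<in> c) \<noteq> (j \<in> c)))"

definition code_del :: "nat set set \<Rightarrow> nat \<Rightarrow> nat set set" where
  "code_del C i = (\<lambda>c. c - {i}) ` C"

definition bool_interval :: "nat set \<Rightarrow> nat set \<Rightarrow> nat set set" where
  "bool_interval s t = {g. s \<subseteq> g \<and> g \<subseteq> t}"

definition is_piercing :: "nat set set \<Rightarrow> nat \<Rightarrow> nat \<Rightarrow> bool" where
  "is_piercing C i k \<longleftrightarrow> (\<exists>s t. s \<subseteq> t \<and> finite t \<and> i \<notin> t \<and> card (t - s) = k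
     \<and> bool_interval s t \<subseteq> code_del C i
     \<and> C = code_del C i \<union> bool_interval (insert i s) (insert i t))"

inductive k_ind_pierced :: "nat \<Rightarrow> nat set set \<Rightarrow> bool" for k where
  base: "k_ind_pierced k {{}}"
| step: "is_piercing C i k' \<Longrightarrow> k' \<le> k \<Longrightarrow> k_ind_pierced k (code_del C i)
          \<Longrightarrow> k_ind_pierced k C"

definition ind_pierced :: "nat set set \<Rightarrow> bool" where
  "ind_pierced C \<longleftrightarrow> (\<exists>k. k_ind_pierced k C)"

type_synonym f2poly = "(nat \<Rightarrow>\<^sub>0 nat) \<Rightarrow>\<^sub>0 bit"

definition Xv :: "nat \<Rightarrow> f2poly" where
  "Xv a = Poly_Mapping.single (Poly_Mapping.single a 1) 1"

definition pmono :: "nat set \<Rightarrow> nat set \<Rightarrow> f2poly" where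
  "pmono A B = (\<Prod>a\<in>A. Xv a) * (\<Prod>b\<in>B. 1 - Xv b)"

definition is_pseudo_monomial :: "nat \<Rightarrow> f2poly \<Rightarrow> bool" where
  "is_pseudo_monomial n f \<longleftrightarrow> (\<exists>A B. A \<subseteq> {1..n} \<and> B \<subseteq> {1..n} \<and> A \<inter> B = {} \<and> f = pmono A B)"

definition rho :: "nat \<Rightarrow> nat set \<Rightarrow> f2poly" where
  "rho n g = pmono g ({1..n} - g)"

definition neural_ideal :: "nat \<Rightarrow> nat set set \<Rightarrow> f2poly set" where
  "neural_ideal n C = {f. \<exists>h. f = (\<Sum>g\<in>{g. g \<subseteq> {1..n} \<and> g \<notin> C}. h g * rho n g)}"

definition canonical_form :: "nat \<Rightarrow> nat set set \<Rightarrow> f2poly set" where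
  "canonical_form n C = {f. is_pseudo_monomial n f \<and> f \<in> neural_ideal n C \<and>
      \<not> (\<exists>g. is_pseudo_monomial n g \<and> g \<in> neural_ideal n C \<and> g dvd f \<and> \<not> f dvd g)}"

definition code_graph_edge :: "nat \<Rightarrow> nat set set \<Rightarrow> nat \<Rightarrow> nat \<Rightarrow> bool" where
  "code_graph_edge n C a b \<longleftrightarrow> a \<in> {1..n} \<and> b \<in> {1..n} \<and> a \<noteq> b \<and>
     \<not> (\<exists>A B. A \<inter> B = {} \<and> A \<union> B = {a, b} \<and> pmono A B \<in> canonical_form n C)"

definition realizes :: "nat \<Rightarrow> nat set set \<Rightarrow> (nat \<Rightarrow> 'a set) \<Rightarrow> bool" where
  "realizes n C U \<longleftrightarrow>
     C = {g. g \<subseteq> {1..n} \<and> (\<Inter>i\<in>g. U i) - (\<Union>j\<in>{1..n} - g. U j) \<noteq> {}}"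

definition is_sphere_of_dim :: "nat \<Rightarrow> 'a::euclidean_space set \<Rightarrow> bool" where
  "is_sphere_of_dim j X \<longleftrightarrow> (\<exists>A c r. affine A \<and> aff_dim A = int j + 1 \<and> c \<in> A \<and> r > 0
      \<and> X = A \<inter> sphere c r)"

definition well_formed_balls :: "nat set \<Rightarrow> (nat \<Rightarrow> 'a::euclidean_space) \<Rightarrow> (nat \<Rightarrow> real) \<Rightarrow> bool" where
  "well_formed_balls I c r \<longleftrightarrow>
     (\<forall>S. S \<subseteq> I \<and> S \<noteq> {} \<and> card S \<le> DIM('a) \<longrightarrow>
        (\<Inter>i\<in>S. sphere (c i) (r i)) = {} \<or>
        is_sphere_of_dim (DIM('a) - card S) (\<Inter>i\<in>S. sphere (c i) (r i)))
   \<and> (\<forall>S. S \<subseteq> I \<and> card S = DIM('a) + 1 \<longrightarrow> (\<Inter>i\<in>S. sphere (c i) (r i)) = {})"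

end

theory Submission
  imports Defs
begin


lemma lin_dep_family:
  fixes w :: "nat \<Rightarrow> 'b::euclidean_space"
  assumes "finite K" "card K > DIM('b)"
  shows "\<exists>l. (\<exists>i\<in>K. l i \<noteq> 0) \<and> (\<Sum>i\<in>K. l i *\<^sub>R w i) = 0"
proof (cases "inj_on w K")
  case True
  have "card (w ` K) > DIM('b)" using True assms by (simp add: card_image)
  hence "dependent (w ` K)" using dependent_biggerset by blast
  then obtain u where u: "\<exists>v\<in>w ` K. u v \<noteq> 0" "(\<Sum>v\<in>w ` K. u v *\<^sub>R v) = 0"
    using dependent_finite[of "w ` K"] assms(1) by auto
  have "(\<Sum>i\<in>K. u (w i) *\<^sub>R w i) = (\<Sum>v\<in>w ` K. u v *\<^sub>R v)"
    using sum.reindex[OF True, of "\<lambda>v. u v *\<^sub>R v"] by simp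
  thus ?thesis using u by (intro exI[of _ "\<lambda>i. u (w i)"]) auto
next
  case False
  then obtain i j where ij: "i \<in> K" "j \<in> K" "i \<noteq> j" "w i = w j" unfolding inj_on_def by blast
  define l where "l = (\<lambda>m. if m = i then (1::real) else if m = j then -1 else 0)"
  have "(\<Sum>m\<in>K. l m *\<^sub>R w m) = (\<Sum>m\<in>{i,j}. l m *\<^sub>R w m)"
    by (rule sum.mono_neutral_right) (use assms ij in \<open>auto simp: l_def\<close>)
  also have "\<dots> = 0" using ij by (simp add: l_def)
  finally show ?thesis using ij by (intro exI[of _ l]) (auto simp: l_def)
qed

lemma no_venn:
  fixes c :: "nat \<Rightarrow> 'a::euclidean_space" and r :: "nat \<Rightarrow> real"
  assumes fin: "finite K" and card: "card K = DIM('a) + 2"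
    and rpos: "\<forall>i\<in>K. r i > 0"
    and pat: "\<And>S. S \<subseteq> K \<Longrightarrow> \<exists>x. \<forall>i\<in>K. (x \<in> ball (c i) (r i) \<longleftrightarrow> i \<in> S)"
  shows False
proof -
  have "card K > DIM(real \<times> 'a)" using card by simp
  then obtain l where l0: "\<exists>i\<in>K. l i \<noteq> 0" and ls: "(\<Sum>i\<in>K. l i *\<^sub>R ((1::real), c i)) = 0"
    using lin_dep_family[OF fin, of "\<lambda>i. ((1::real), c i)"] by blast
  have s1: "(\<Sum>i\<in>K. l i) = 0" using arg_cong[OF ls, of fst] by (simp add: fst_sum)
  have s2: "(\<Sum>i\<in>K. l i *\<^sub>R c i) = 0" using arg_cong[OF ls, of snd] by (simp add: snd_sum)
  define f where "f = (\<lambda>i x. (norm (x - c i))\<^sup>2 - (r i)\<^sup>2)"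
  define mu where "mu = (\<Sum>i\<in>K. l i * (c i \<bullet> c i - (r i)\<^sup>2))"
  have key: "(\<Sum>i\<in>K. l i * f i x) = mu" for x
  proof -
    have e: "l i * f i x = l i * (x \<bullet> x) - 2 * (x \<bullet> (l i *\<^sub>R c i)) + l i * (c i \<bullet> c i - (r i)\<^sup>2)" for i
      by (simp add: f_def power2_norm_eq_inner inner_diff_left inner_diff_right inner_commute algebra_simps)
    have "(\<Sum>i\<in>K. l i * f i x) = (\<Sum>i\<in>K. l i) * (x \<bullet> x) - 2 * (x \<bullet> (\<Sum>i\<in>K. l i *\<^sub>R c i)) + mu"
      by (simp add: e sum.distrib sum_subtractf sum_distrib_left sum_distrib_right inner_sum_right mu_def)
    thus ?thesis using s1 s2 by simp
  qed
  have inb: "x \<in> ball (c i) (r i) \<longleftrightarrow> f i x < 0" if "i \<in> K" for i x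
  proof -
    have "x \<in> ball (c i) (r i) \<longleftrightarrow> norm (x - c i) < r i" by (simp add: dist_norm norm_minus_commute)
    also have "\<dots> \<longleftrightarrow> (norm (x - c i))\<^sup>2 < (r i)\<^sup>2"
      using rpos that by (meson less_imp_le norm_ge_zero power2_less_imp_less power_strict_mono pos2)
    finally show ?thesis by (simp add: f_def)
  qed
  define Pos where "Pos = {i\<in>K. l i > 0}"
  define Neg where "Neg = {i\<in>K. l i < 0}"
  have A: False if "mu \<ge> 0" "Pos \<noteq> {}"
  proof -
    obtain x where x: "\<forall>i\<in>K. (x \<in> ball (c i) (r i) \<longleftrightarrow> i \<in> Pos)" using pat[of Pos] by (auto simp: Pos_def)
    have "(\<Sum>i\<in>K. l i * f i x) < (\<Sum>i\<in>K. 0)"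
    proof (rule sum_strict_mono_ex1[OF fin])
      show "\<forall>i\<in>K. l i * f i x \<le> 0"
      proof
        fix i assume i: "i \<in> K"
        show "l i * f i x \<le> 0"
        proof (cases "l i > 0")
          case True thus ?thesis using x inb[OF i, of x] i by (auto simp: Pos_def intro: mult_pos_neg[THEN less_imp_le])
        next
          case False thus ?thesis using x inb[OF i, of x] i by (auto simp: Pos_def mult_nonpos_nonneg)
        qed
      qed
      from that(2) obtain i where "i \<in> Pos" by auto
      hence "i \<in> K" "l i > 0" "f i x < 0" using x inb[of i x] by (auto simp: Pos_def)
      thus "\<exists>i\<in>K. l i * f i x < 0" using mult_pos_neg by blast
    qed
    thus False using key[of x] that(1) by simp
  qed
  have B: False if "mu \<le> 0" "Neg \<noteq> {}"
  proof -
    obtain x where x: "\<forall>i\<in>K. (x \<in> ball (c i) (r i) \<longleftrightarrow> i \<in> Neg)" using pat[of Neg] by (auto simp: Neg_def)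
    have "(\<Sum>i\<in>K. 0) < (\<Sum>i\<in>K. l i * f i x)"
    proof (rule sum_strict_mono_ex1[OF fin])
      show "\<forall>i\<in>K. 0 \<le> l i * f i x"
      proof
        fix i assume i: "i \<in> K"
        show "0 \<le> l i * f i x"
        proof (cases "l i < 0")
          case True thus ?thesis using x inb[OF i, of x] i by (auto simp: Neg_def mult_neg_neg intro: less_imp_le)
        next
          case False thus ?thesis using x inb[OF i, of x] i by (auto simp: Neg_def)
        qed
      qed
      from that(2) obtain i where "i \<in> Neg" by auto
      hence "i \<in> K" "l i < 0" "f i x < 0" using x inb[of i x] by (auto simp: Neg_def)
      thus "\<exists>i\<in>K. 0 < l i * f i x" using mult_neg_neg by blast
    qed
    thus False using key[of x] that(1) by simp
  qed
  obtain x0 where x0: "\<forall>i\<in>K. (x0 \<in> ball (c i) (r i) \<longleftrightarrow> i \<in> {})" using pat[of "{}"] by auto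
  have f0: "\<forall>i\<in>K. f i x0 \<ge> 0" using x0 inb by force
  have C: False if "mu > 0" "Pos = {}"
  proof -
    have "(\<Sum>i\<in>K. l i * f i x0) \<le> 0"
      by (rule sum_nonpos) (use f0 that(2) in \<open>auto simp: Pos_def mult_nonpos_nonneg\<close>)
    thus False using key[of x0] that(1) by simp
  qed
  have D: False if "mu < 0" "Neg = {}"
  proof -
    have "(\<Sum>i\<in>K. l i * f i x0) \<ge> 0"
      by (rule sum_nonneg) (use f0 that(2) in \<open>auto simp: Neg_def\<close>)
    thus False using key[of x0] that(1) by simp
  qed
  have "Pos \<noteq> {} \<or> Neg \<noteq> {}" using l0 by (auto simp: Pos_def Neg_def) (meson linorder_neqE_linordered_idom)
  thus False using A B C D by fastforce
qed



lemma pierced_patterns: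
  assumes "k_ind_pierced k0 C"
  shows "finite K \<Longrightarrow> (\<forall>a\<in>K. \<exists>c\<in>C. a \<in> c) \<Longrightarrow>
    (\<forall>a\<in>K. \<forall>b\<in>K. a \<noteq> b \<longrightarrow> (\<exists>c\<in>C. a \<in> c \<and> b \<in> c) \<and> (\<exists>c\<in>C. a \<in> c \<and> b \<notin> c)) \<Longrightarrow>
    S \<subseteq> K \<Longrightarrow> \<exists>c\<in>C. c \<inter> K = S"
  using assms
proof (induction arbitrary: K S rule: k_ind_pierced.induct)
  case base
  thus ?case by auto
next
  case (step C i k')
  let ?C' = "code_del C i"
  obtain s t where st: "s \<subseteq> t" "finite t" "i \<notin> t" "bool_interval s t \<subseteq> ?C'"
    and CC: "C = ?C' \<union> bool_interval (insert i s) (insert i t)"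
    using step.hyps(1) unfolding is_piercing_def by blast
  have sub: "?C' \<subseteq> C" using CC by blast
  have noi: "i \<notin> c" if "c \<in> ?C'" for c using that by (auto simp: code_del_def)
  have withi: "insert i s \<subseteq> c \<and> c \<subseteq> insert i t" if "c \<in> C" "i \<in> c" for c
  proof -
    have "c \<in> ?C' \<union> bool_interval (insert i s) (insert i t)" using that(1) CC by blast
    thus ?thesis using that(2) noi by (auto simp: bool_interval_def)
  qed
  have del: "c - {i} \<in> ?C'" if "c \<in> C" for c using that by (auto simp: code_del_def)
  define K' where "K' = K - {i}"
  have K'1: "\<forall>a\<in>K'. \<exists>c\<in>?C'. a \<in> c"
  proof
    fix a assume "a \<in> K'"
    hence aK: "a \<in> K" "a \<noteq> i" by (auto simp: K'_def)
    from step.prems(2) aK(1) obtain c where c: "c \<in> C" "a \<in> c" by (elim ballE bexE) auto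
    have "c - {i} \<in> ?C'" by (rule del[OF c(1)])
    moreover have "a \<in> c - {i}" using c aK by simp
    ultimately show "\<exists>c\<in>?C'. a \<in> c" by (rule bexI[rotated])
  qed
  have K'2: "\<forall>a\<in>K'. \<forall>b\<in>K'. a \<noteq> b \<longrightarrow> (\<exists>c\<in>?C'. a \<in> c \<and> b \<in> c) \<and> (\<exists>c\<in>?C'. a \<in> c \<and> b \<notin> c)"
  proof (intro ballI impI conjI)
    fix a b assume ab: "a \<in> K'" "b \<in> K'" "a \<noteq> b"
    hence ab2: "a \<in> K" "b \<in> K" "a \<noteq> i" "b \<noteq> i" by (auto simp: K'_def)
    have P3: "(\<exists>c\<in>C. a \<in> c \<and> b \<in> c) \<and> (\<exists>c\<in>C. a \<in> c \<and> b \<notin> c)"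
      using step.prems(3) ab2(1,2) ab(3) by blast
    then obtain c where c: "c \<in> C" "a \<in> c" "b \<in> c" by blast
    have "c - {i} \<in> ?C'" by (rule del[OF c(1)])
    moreover have "a \<in> c - {i} \<and> b \<in> c - {i}" using c ab2 by simp
    ultimately show "\<exists>c\<in>?C'. a \<in> c \<and> b \<in> c" by (rule bexI[rotated])
    from P3 obtain c2 where c2: "c2 \<in> C" "a \<in> c2" "b \<notin> c2" by blast
    have "c2 - {i} \<in> ?C'" by (rule del[OF c2(1)])
    moreover have "a \<in> c2 - {i} \<and> b \<notin> c2 - {i}" using c2 ab2 by simp
    ultimately show "\<exists>c\<in>?C'. a \<in> c \<and> b \<notin> c" by (rule bexI[rotated])
  qed
  show ?case
  proof (cases "i \<in> K")
    case False
    hence "K' = K" by (simp add: K'_def)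
    then obtain c where "c \<in> ?C'" "c \<inter> K = S"
      using step.IH[of K S] step.prems K'1 K'2 by auto
    thus ?thesis using sub by blast
  next
    case iK: True
    have jt: "j \<in> t - s" if "j \<in> K'" for j
    proof -
      have ji: "j \<in> K" "j \<noteq> i" using that by (auto simp: K'_def)
      obtain c where c: "c \<in> C" "i \<in> c" "j \<in> c" using step.prems(3) ji iK by metis
      obtain c2 where c2: "c2 \<in> C" "i \<in> c2" "j \<notin> c2" using step.prems(3) ji iK by metis
      show ?thesis using withi[OF c(1,2)] withi[OF c2(1,2)] c c2 ji by auto
    qed
    show ?thesis
    proof (cases "i \<in> S")
      case False
      hence "S \<subseteq> K'" using step.prems(4) by (auto simp: K'_def)
      then obtain c where c: "c \<in> ?C'" "c \<inter> K' = S"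
        using step.IH[of K' S] step.prems(1) K'1 K'2 by (auto simp: K'_def)
      have "c \<inter> K = S" using c noi[OF c(1)] by (auto simp: K'_def)
      thus ?thesis using c sub by blast
    next
      case True
      define c where "c = insert i (s \<union> (S - {i}))"
      have "S - {i} \<subseteq> K'" using step.prems(4) by (auto simp: K'_def)
      hence Ssub: "S - {i} \<subseteq> t - s" using jt by blast
      have "c \<in> bool_interval (insert i s) (insert i t)"
        using Ssub st by (auto simp: c_def bool_interval_def)
      hence "c \<in> C" using CC by blast
      moreover have "s \<inter> K = {}" using jt st(1,3) by (auto simp: K'_def)
      hence "c \<inter> K = S" using True iK step.prems(4) by (auto simp: c_def)
      ultimately show ?thesis by blast
    qed
  qed
qed



definition ev :: "nat set \<Rightarrow> f2poly \<Rightarrow> bit" where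
  "ev P f = (\<Sum>m\<in>Poly_Mapping.keys f. if Poly_Mapping.keys m \<subseteq> P then Poly_Mapping.lookup f m else 0)"

lemma ev_add: "ev P (f + g) = ev P f + ev P g"
  unfolding ev_def
  by (rule setsum_keys_plus_distrib[where f="\<lambda>m v. if Poly_Mapping.keys m \<subseteq> P then v else 0"]) auto

lemma ev_zero[simp]: "ev P 0 = 0" by (simp add: ev_def)

lemma ev_single: "ev P (Poly_Mapping.single m a) = (if Poly_Mapping.keys m \<subseteq> P then a else 0)"
  by (cases "a = 0") (auto simp: ev_def)

lemma ev_sum: "ev P (sum h A) = (\<Sum>x\<in>A. ev P (h x))"
  by (induction A rule: infinite_finite_induct) (auto simp: ev_add)

lemma ev_diff: "ev P (f - g) = ev P f - ev P g"
proof -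
  have "ev P f = ev P (f - g) + ev P g" using ev_add[of P "f - g" g] by simp
  thus ?thesis by (metis add_diff_cancel)
qed

lemma poly_expand: "(f::('a::monoid_add \<Rightarrow>\<^sub>0 'b::comm_monoid_add)) = (\<Sum>m\<in>Poly_Mapping.keys f. Poly_Mapping.single m (Poly_Mapping.lookup f m))"
proof (rule poly_mapping_eqI)
  fix k
  have "Poly_Mapping.lookup (\<Sum>m\<in>Poly_Mapping.keys f. Poly_Mapping.single m (Poly_Mapping.lookup f m)) k
     = (\<Sum>m\<in>Poly_Mapping.keys f. if m = k then Poly_Mapping.lookup f m else 0)"
    by (simp add: lookup_sum lookup_single when_def)
  also have "\<dots> = Poly_Mapping.lookup f k"
    by (simp add: in_keys_iff)
  finally show "Poly_Mapping.lookup f k = Poly_Mapping.lookup (\<Sum>m\<in>Poly_Mapping.keys f. Poly_Mapping.single m (Poly_Mapping.lookup f m)) k" by simp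
qed

lemma keys_add_nat: "Poly_Mapping.keys ((m::nat \<Rightarrow>\<^sub>0 nat) + m') = Poly_Mapping.keys m \<union> Poly_Mapping.keys m'"
  by (auto simp: in_keys_iff lookup_add)

lemma ev_mult: "ev P (f * g) = ev P f * ev P g"
proof -
  let ?F = "Poly_Mapping.keys f" and ?G = "Poly_Mapping.keys g"
  let ?lf = "Poly_Mapping.lookup f" and ?lg = "Poly_Mapping.lookup g"
  have "f * g = (\<Sum>m\<in>?F. Poly_Mapping.single m (?lf m)) * (\<Sum>m'\<in>?G. Poly_Mapping.single m' (?lg m'))"
    using poly_expand[of f] poly_expand[of g] by simp
  also have "\<dots> = (\<Sum>m\<in>?F. \<Sum>m'\<in>?G. Poly_Mapping.single (m + m') (?lf m * ?lg m'))"
    by (simp only: sum_product mult_single)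
  finally have "ev P (f * g) = (\<Sum>m\<in>?F. \<Sum>m'\<in>?G. ev P (Poly_Mapping.single (m + m') (?lf m * ?lg m')))"
    by (simp add: ev_sum)
  also have "\<dots> = (\<Sum>m\<in>?F. \<Sum>m'\<in>?G. (if Poly_Mapping.keys m \<subseteq> P then ?lf m else 0) * (if Poly_Mapping.keys m' \<subseteq> P then ?lg m' else 0))"
    by (intro sum.cong refl) (simp only: ev_single keys_add_nat Un_subset_iff if_True if_False mult_zero_left mult_zero_right split: if_split, blast)
  also have "\<dots> = ev P f * ev P g"
    by (simp only: ev_def sum_product)
  finally show ?thesis .
qed

lemma ev_one[simp]: "ev P 1 = 1"
proof -
  have "(1::f2poly) = Poly_Mapping.single 0 1" by simp
  thus ?thesis by (metis ev_single keys_zero empty_subsetI)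
qed

lemma ev_prod: "ev P (prod h A) = (\<Prod>x\<in>A. ev P (h x))"
  by (induction A rule: infinite_finite_induct) (auto simp: ev_mult)

lemma ev_Xv: "ev P (Xv a) = (if a \<in> P then 1 else 0)"
  by (simp add: Xv_def ev_single)

lemma prod_ind_bit: "finite A \<Longrightarrow> (\<Prod>x\<in>A. (if Q x then 1 else 0::bit)) = (if \<forall>x\<in>A. Q x then 1 else 0)"
  by (induction A rule: finite_induct) auto

lemma ev_pmono: "finite A \<Longrightarrow> finite B \<Longrightarrow>
   ev P (pmono A B) = (if A \<subseteq> P \<and> B \<inter> P = {} then 1 else 0)"
proof -
  assume fA: "finite A" and fB: "finite B"
  have e1: "(\<Prod>a\<in>A. ev P (Xv a)) = (if A \<subseteq> P then 1 else 0)"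
    using prod_ind_bit[OF fA, of "\<lambda>a. a \<in> P"] by (simp add: ev_Xv subset_iff)
  have "ev P (1 - Xv b) = (if b \<notin> P then 1 else 0)" for b by (simp add: ev_diff ev_Xv)
  hence e2: "(\<Prod>b\<in>B. ev P (1 - Xv b)) = (if B \<inter> P = {} then 1 else 0)"
    using prod_ind_bit[OF fB, of "\<lambda>b. b \<notin> P"] by (simp add: disjoint_iff)
  show ?thesis by (simp add: pmono_def ev_mult ev_prod e1 e2)
qed

lemma ev_ideal:
  assumes "f \<in> neural_ideal n C" "c \<in> C" "c \<subseteq> {1..n}"
  shows "ev c f = 0"
proof -
  obtain h where f: "f = (\<Sum>g\<in>{g. g \<subseteq> {1..n} \<and> g \<notin> C}. h g * rho n g)"
    using assms(1) by (auto simp: neural_ideal_def)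
  have "ev c (rho n g) = 0" if "g \<subseteq> {1..n}" "g \<notin> C" for g
  proof -
    have "g \<noteq> c" using that assms by auto
    hence "\<not> (g \<subseteq> c \<and> ({1..n} - g) \<inter> c = {})" using that assms(3) by auto
    moreover have "finite g" using that finite_subset by blast
    ultimately show ?thesis by (simp add: rho_def ev_pmono)
  qed
  thus ?thesis by (simp add: f ev_sum ev_mult)
qed

lemma pmono_expand:
  assumes AB: "A \<subseteq> {1..n}" "B \<subseteq> {1..n}" "A \<inter> B = {}"
  shows "pmono A B = (\<Sum>g\<in>{g. g \<subseteq> {1..n} \<and> A \<subseteq> g \<and> g \<inter> B = {}}. rho n g)"
proof -
  define R where "R = {1..n} - A - B"
  have fR: "finite R" by (simp add: R_def)
  have fA: "finite A" and fB: "finite B" using AB finite_subset by blast+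
  have "(\<Prod>j\<in>R. Xv j + (1 - Xv j)) = (1::f2poly)" by simp
  hence one: "(\<Sum>T\<in>Pow R. (\<Prod>j\<in>T. Xv j) * (\<Prod>j\<in>R - T. 1 - Xv j)) = (1::f2poly)"
    using prod_add[OF fR, of Xv "\<lambda>j. 1 - Xv j"] by simp
  have each: "pmono A B * ((\<Prod>j\<in>T. Xv j) * (\<Prod>j\<in>R - T. 1 - Xv j)) = rho n (A \<union> T)"
    if "T \<in> Pow R" for T
  proof -
    have T: "T \<subseteq> R" "finite T" using that fR finite_subset by auto
    have d1: "A \<inter> T = {}" using T by (auto simp: R_def)
    have eq: "{1..n} - (A \<union> T) = B \<union> (R - T)" using T AB by (auto simp: R_def)
    have d2: "B \<inter> (R - T) = {}" by (auto simp: R_def)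
    have "rho n (A \<union> T) = (\<Prod>j\<in>A \<union> T. Xv j) * (\<Prod>j\<in>B \<union> (R - T). 1 - Xv j)"
      by (simp only: rho_def pmono_def eq)
    also have "\<dots> = ((\<Prod>j\<in>A. Xv j) * (\<Prod>j\<in>T. Xv j)) * ((\<Prod>j\<in>B. 1 - Xv j) * (\<Prod>j\<in>R - T. 1 - Xv j))"
      using fA fB T fR d1 d2 by (simp add: prod.union_disjoint)
    finally show ?thesis by (simp add: pmono_def mult_ac)
  qed
  have "pmono A B = pmono A B * (\<Sum>T\<in>Pow R. (\<Prod>j\<in>T. Xv j) * (\<Prod>j\<in>R - T. 1 - Xv j))"
    using one by simp
  also have "\<dots> = (\<Sum>T\<in>Pow R. rho n (A \<union> T))"
    by (simp add: sum_distrib_left each)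
  also have "\<dots> = (\<Sum>g\<in>(\<lambda>T. A \<union> T) ` Pow R. rho n g)"
  proof (rule sum.reindex[symmetric, unfolded comp_def])
    show "inj_on (\<lambda>T. A \<union> T) (Pow R)" by (rule inj_onI) (auto simp: R_def)
  qed
  also have "(\<lambda>T. A \<union> T) ` Pow R = {g. g \<subseteq> {1..n} \<and> A \<subseteq> g \<and> g \<inter> B = {}}"
  proof (rule set_eqI, rule iffI)
    fix g assume "g \<in> (\<lambda>T. A \<union> T) ` Pow R"
    thus "g \<in> {g. g \<subseteq> {1..n} \<and> A \<subseteq> g \<and> g \<inter> B = {}}" using AB by (auto simp: R_def)
  next
    fix g assume g: "g \<in> {g. g \<subseteq> {1..n} \<and> A \<subseteq> g \<and> g \<inter> B = {}}"
    hence "g = A \<union> (g - A)" "g - A \<in> Pow R" by (auto simp: R_def)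
    thus "g \<in> (\<lambda>T. A \<union> T) ` Pow R" by blast
  qed
  finally show ?thesis .
qed

lemma pmono_in_ideal:
  assumes AB: "A \<subseteq> {1..n}" "B \<subseteq> {1..n}" "A \<inter> B = {}"
    and no: "\<not> (\<exists>c\<in>C. A \<subseteq> c \<and> c \<inter> B = {})"
  shows "pmono A B \<in> neural_ideal n C"
proof -
  define h where "h = (\<lambda>g. if A \<subseteq> g \<and> g \<inter> B = {} then (1::f2poly) else 0)"
  have fin: "finite {g. g \<subseteq> {1..n} \<and> g \<notin> C}" by (rule finite_subset[of _ "Pow {1..n}"]) auto
  have "(\<Sum>g\<in>{g. g \<subseteq> {1..n} \<and> g \<notin> C}. h g * rho n g)
      = (\<Sum>g\<in>{g. g \<subseteq> {1..n} \<and> A \<subseteq> g \<and> g \<inter> B = {}}. rho n g)"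
  proof (rule sum.mono_neutral_cong_right[OF fin])
    show "{g. g \<subseteq> {1..n} \<and> A \<subseteq> g \<and> g \<inter> B = {}} \<subseteq> {g. g \<subseteq> {1..n} \<and> g \<notin> C}" using no by auto
    show "\<forall>i\<in>{g. g \<subseteq> {1..n} \<and> g \<notin> C} - {g. g \<subseteq> {1..n} \<and> A \<subseteq> g \<and> g \<inter> B = {}}. h i * rho n i = 0"
      by (auto simp: h_def)
    show "\<And>x. x \<in> {g. g \<subseteq> {1..n} \<and> A \<subseteq> g \<and> g \<inter> B = {}} \<Longrightarrow> h x * rho n x = rho n x"
      by (auto simp: h_def)
  qed
  hence "pmono A B = (\<Sum>g\<in>{g. g \<subseteq> {1..n} \<and> g \<notin> C}. h g * rho n g)"
    using pmono_expand[OF AB] by simp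
  thus ?thesis unfolding neural_ideal_def by blast
qed

lemma pmono_in_cf:
  assumes AB: "A \<subseteq> {1..n}" "B \<subseteq> {1..n}" "A \<inter> B = {}"
    and no: "\<not> (\<exists>c\<in>C. A \<subseteq> c \<and> c \<inter> B = {})"
    and Csub: "C \<subseteq> Pow {1..n}"
    and others: "\<And>A' B'. A' \<subseteq> A \<Longrightarrow> B' \<subseteq> B \<Longrightarrow> (A', B') \<noteq> (A, B) \<Longrightarrow> \<exists>c\<in>C. A' \<subseteq> c \<and> B' \<inter> c = {}"
  shows "pmono A B \<in> canonical_form n C"
proof -
  have fA: "finite A" and fB: "finite B" using AB finite_subset by blast+
  have pm: "is_pseudo_monomial n (pmono A B)" using AB by (auto simp: is_pseudo_monomial_def)
  have inJ: "pmono A B \<in> neural_ideal n C" by (rule pmono_in_ideal[OF AB no])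
  have nomin: False if g: "is_pseudo_monomial n g" "g \<in> neural_ideal n C" "g dvd pmono A B" "\<not> pmono A B dvd g" for g
  proof -
    obtain A' B' where A'B': "A' \<subseteq> {1..n}" "B' \<subseteq> {1..n}" "A' \<inter> B' = {}" "g = pmono A' B'"
      using g(1) by (auto simp: is_pseudo_monomial_def)
    have fA': "finite A'" and fB': "finite B'" using A'B' finite_subset by blast+
    obtain q where q: "pmono A B = g * q" using g(3) by (auto elim: dvdE)
    have evf: "ev P (pmono A B) = ev P g * ev P q" for P using q by (simp add: ev_mult)
    have sA: "A' \<subseteq> A"
    proof
      fix e assume e: "e \<in> A'"
      show "e \<in> A"
      proof (rule ccontr)
        assume "e \<notin> A"
        hence "ev A g = 0" using e by (auto simp: A'B'(4) ev_pmono fA' fB')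
        moreover have "ev A (pmono A B) = 1" using AB(3) by (simp add: ev_pmono fA fB Int_commute)
        ultimately show False using evf[of A] by simp
      qed
    qed
    have sB: "B' \<subseteq> B"
    proof
      fix e assume e: "e \<in> B'"
      show "e \<in> B"
      proof (rule ccontr)
        assume eB: "e \<notin> B"
        hence "ev (insert e A) g = 0" using e by (auto simp: A'B'(4) ev_pmono fA' fB')
        moreover have "ev (insert e A) (pmono A B) = 1" using AB(3) eB by (auto simp: ev_pmono fA fB)
        ultimately show False using evf[of "insert e A"] by simp
      qed
    qed
    show False
    proof (cases "(A', B') = (A, B)")
      case True
      thus False using g(4) A'B'(4) by auto
    next
      case False
      then obtain c where c: "c \<in> C" "A' \<subseteq> c" "B' \<inter> c = {}" using others[OF sA sB] by blast
      have "ev c g = 1" using c by (simp add: A'B'(4) ev_pmono fA' fB')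
      moreover have "ev c g = 0" using ev_ideal[OF g(2) c(1)] c(1) Csub by auto
      ultimately show False by simp
    qed
  qed
  show ?thesis unfolding canonical_form_def using pm inJ nomin by blast
qed


theorem lemma3p7:
  fixes n k :: nat and C :: "nat set set" and K :: "nat set"
  assumes "is_code n C"
    and "ind_pierced C"
    and "K \<subseteq> {1..n}" and "card K = k + 1"
    and "\<forall>a\<in>K. \<forall>b\<in>K. a \<noteq> b \<longrightarrow> code_graph_edge n C a b"
    and "DIM('a::euclidean_space) = k - 1"
  shows "\<not> (\<exists>(c :: nat \<Rightarrow> 'a) r. (\<forall>i\<in>{1..n}. r i > 0)
            \<and> well_formed_balls {1..n} c r
            \<and> realizes n C (\<lambda>i. ball (c i) (r i)))"
proof
  assume "\<exists>(c :: nat \<Rightarrow> 'a) r. (\<forall>i\<in>{1..n}. r i > 0)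
            \<and> well_formed_balls {1..n} c r
            \<and> realizes n C (\<lambda>i. ball (c i) (r i))"
  then obtain c :: "nat \<Rightarrow> 'a" and r where rpos: "\<forall>i\<in>{1..n}. r i > 0"
    and real: "realizes n C (\<lambda>i. ball (c i) (r i))" by blast
  have code: "C \<subseteq> Pow {1..n}" "{} \<in> C" "\<forall>i\<in>{1..n}. \<exists>c\<in>C. i \<in> c"
    using assms(1) by (auto simp: is_code_def)
  have finK: "finite K" using assms(3) finite_subset by blast
  have cardK: "card K = DIM('a) + 2" using assms(4,6) DIM_positive[where 'a='a] by linarith
  have inK: "\<forall>a\<in>K. \<exists>c\<in>C. a \<in> c" using code(3) assms(3) by blast
  have both: "\<exists>c\<in>C. a \<in> c \<and> b \<in> c" if ab: "a \<in> K" "b \<in> K" "a \<noteq> b" for a b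
  proof (rule ccontr)
    assume no: "\<not> (\<exists>c\<in>C. a \<in> c \<and> b \<in> c)"
    have "pmono {a, b} {} \<in> canonical_form n C"
    proof (rule pmono_in_cf)
      show "{a, b} \<subseteq> {1..n}" "{} \<subseteq> {1..n}" "{a, b} \<inter> {} = {}" using ab assms(3) by auto
      show "\<not> (\<exists>c\<in>C. {a, b} \<subseteq> c \<and> c \<inter> {} = {})" using no by auto
      show "C \<subseteq> Pow {1..n}" by (rule code(1))
      fix A' B' :: "nat set" assume h: "A' \<subseteq> {a, b}" "B' \<subseteq> {}" "(A', B') \<noteq> ({a, b}, {})"
      hence "A' \<subseteq> {a} \<or> A' \<subseteq> {b}" by auto
      moreover obtain ca where "ca \<in> C" "a \<in> ca" using inK ab by blast
      moreover obtain cb where "cb \<in> C" "b \<in> cb" using inK ab by blast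
      ultimately show "\<exists>c\<in>C. A' \<subseteq> c \<and> B' \<inter> c = {}" using h(2) by blast
    qed
    hence "\<exists>A B. A \<inter> B = {} \<and> A \<union> B = {a, b} \<and> pmono A B \<in> canonical_form n C"
      by (intro exI[of _ "{a, b}"] exI[of _ "{}"]) simp
    moreover have "code_graph_edge n C a b" using assms(5) ab by blast
    ultimately show False unfolding code_graph_edge_def by blast
  qed
  have one: "\<exists>c\<in>C. a \<in> c \<and> b \<notin> c" if ab: "a \<in> K" "b \<in> K" "a \<noteq> b" for a b
  proof (rule ccontr)
    assume no: "\<not> (\<exists>c\<in>C. a \<in> c \<and> b \<notin> c)"
    have "pmono {a} {b} \<in> canonical_form n C"
    proof (rule pmono_in_cf)
      show "{a} \<subseteq> {1..n}" "{b} \<subseteq> {1..n}" "{a} \<inter> {b} = {}" using ab assms(3) by auto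
      show "\<not> (\<exists>c\<in>C. {a} \<subseteq> c \<and> c \<inter> {b} = {})" using no by auto
      show "C \<subseteq> Pow {1..n}" by (rule code(1))
      fix A' B' :: "nat set" assume h: "A' \<subseteq> {a}" "B' \<subseteq> {b}" "(A', B') \<noteq> ({a}, {b})"
      show "\<exists>c\<in>C. A' \<subseteq> c \<and> B' \<inter> c = {}"
      proof (cases "A' = {}")
        case True thus ?thesis using code(2) by blast
      next
        case False
        hence "A' = {a}" "B' = {}" using h by auto
        moreover obtain ca where "ca \<in> C" "a \<in> ca" using inK ab by blast
        ultimately show ?thesis by blast
      qed
    qed
    hence "\<exists>A B. A \<inter> B = {} \<and> A \<union> B = {a, b} \<and> pmono A B \<in> canonical_form n C"
      using ab by (intro exI[of _ "{a}"] exI[of _ "{b}"]) auto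
    moreover have "code_graph_edge n C a b" using assms(5) ab by blast
    ultimately show False unfolding code_graph_edge_def by blast
  qed
  obtain k0 where kp: "k_ind_pierced k0 C" using assms(2) by (auto simp: ind_pierced_def)
  have pats: "\<exists>cw\<in>C. cw \<inter> K = S" if "S \<subseteq> K" for S
  proof (rule pierced_patterns[OF kp finK inK _ that])
    show "\<forall>a\<in>K. \<forall>b\<in>K. a \<noteq> b \<longrightarrow> (\<exists>c\<in>C. a \<in> c \<and> b \<in> c) \<and> (\<exists>c\<in>C. a \<in> c \<and> b \<notin> c)"
      using both one by simp
  qed
  show False
  proof (rule no_venn[OF finK cardK, of r c])
    show "\<forall>i\<in>K. r i > 0" using rpos assms(3) by blast
    fix S assume S: "S \<subseteq> K"
    then obtain cw where cw: "cw \<in> C" "cw \<inter> K = S" using pats by blast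
    have "(\<Inter>i\<in>cw. ball (c i) (r i)) - (\<Union>j\<in>{1..n} - cw. ball (c j) (r j)) \<noteq> {}"
      using cw(1) real unfolding realizes_def by blast
    then obtain x where x: "x \<in> (\<Inter>i\<in>cw. ball (c i) (r i))" "x \<notin> (\<Union>j\<in>{1..n} - cw. ball (c j) (r j))" by blast
    have "\<forall>i\<in>K. (x \<in> ball (c i) (r i) \<longleftrightarrow> i \<in> S)"
    proof
      fix i assume i: "i \<in> K"
      show "x \<in> ball (c i) (r i) \<longleftrightarrow> i \<in> S"
      proof (cases "i \<in> cw")
        case True thus ?thesis using x(1) cw(2) i by blast
      next
        case False
        hence "i \<in> {1..n} - cw" using i assms(3) by blast
        thus ?thesis using x(2) False cw(2) i by blast
      qed
    qed
    thus "\<exists>x. \<forall>i\<in>K. (x \<in> ball (c i) (r i) \<longleftrightarrow> i \<in> S)" by blast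
  qed
qed

end
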